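(* Let $B>0$. Suppose $y(t,x)$ is a solution of $y_{t}+By_{xxxx}=0$ for $x>0$ (or for $x<0$) and $t>0$ which has the self-similar form $y(t,x)=(Bt)^{1/4}Z\big(x/(Bt)^{1/4}\big)$ for some function $Z$. Then there are constants $C_1,C_2,C_3,C_4\in\mathbb{R}$ such that $$y(t,x)=(Bt)^{1/4}\sum_{i=1}^{4}C_{i}\,z_{i}\!\left(\frac{x}{(Bt)^{1/4}}\right),\qquad x>0\ (\text{or } x<0),\ t>0,$$ where $z_{1}(u)={}_{1}F_{3}(-\tfrac{1}{4};\tfrac{1}{4},\tfrac{1}{2},\tfrac{3}{4};\tfrac{u^{4}}{256})$, $z_{2}(u)=u$, $z_{3}(u)=u^{2}\,{}_{1}F_{3}(\tfrac{1}{4};\tfrac{3}{4},\tfrac{5}{4},\tfrac{3}{2};\tfrac{u^{4}}{256})$, $z_{4}(u)=u^{3}\,{}_{1}F_{3}(\tfrac{1}{2};\tfrac{5}{4},\tfrac{3}{2},\tfrac{7}{4};\tfrac{u^{4}}{256})$.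
   Context: ${}_{p}F_{q}(a_{1},\ldots,a_{p};b_{1},\ldots,b_{q};\nu)=\sum_{k\ge0}\frac{(a_{1})_{k}\cdots(a_{p})_{k}}{(b_{1})_{k}\cdots(b_{q})_{k}}\frac{\nu^{k}}{k!}$ is the generalized hypergeometric function, with Pochhammer symbol $(\lambda)_{k}=\lambda(\lambda+1)\cdots(\lambda+k-1)$, $(\lambda)_0=1$. $B$ is a positive constant (the Mullins coefficient). *)

theory Defs
  imports "HOL-Analysis.Analysis"
begin

definition hyp1F3 :: "real \<Rightarrow> real \<Rightarrow> real \<Rightarrow> real \<Rightarrow> real \<Rightarrow> real" where
  "hyp1F3 a b1 b2 b3 v =
     (\<Sum>k. pochhammer a k / (pochhammer b1 k * pochhammer b2 k * pochhammer b3 k)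
            * v ^ k / fact k)"

definition z1 :: "real \<Rightarrow> real" where
  "z1 u = hyp1F3 (-1/4) (1/4) (1/2) (3/4) (u ^ 4 / 256)"

definition z2 :: "real \<Rightarrow> real" where
  "z2 u = u"

definition z3 :: "real \<Rightarrow> real" where
  "z3 u = u ^ 2 * hyp1F3 (1/4) (3/4) (5/4) (3/2) (u ^ 4 / 256)"

definition z4 :: "real \<Rightarrow> real" where
  "z4 u = u ^ 3 * hyp1F3 (1/2) (5/4) (3/2) (7/4) (u ^ 4 / 256)"

end

theory Submission
  imports Defs
begin
lemma "linear (f :: real\<times>real\<times>real\<times>real \<Rightarrow> real\<times>real\<times>real\<times>real) \<Longrightarrow> inj f \<Longrightarrow> surj f"
  by (rule linear_injective_imp_surjective) auto

fun co :: "nat \<Rightarrow> nat \<Rightarrow> real" where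
  "co j 0 = (if j = 0 then 1 else 0)"
| "co j (Suc 0) = (if j = 1 then 1 else 0)"
| "co j (Suc (Suc 0)) = (if j = 2 then 1 else 0)"
| "co j (Suc (Suc (Suc 0))) = (if j = 3 then 1 else 0)"
| "co j (Suc (Suc (Suc (Suc n)))) = (real n - 1) * co j n / (4 * (real n + 1) * (real n + 2) * (real n + 3) * (real n + 4))"

lemma co_sparse: "n mod 4 \<noteq> j \<Longrightarrow> co j n = 0"
  by (induction j n rule: co.induct) auto

lemma summable_step4:
  fixes f :: "nat \<Rightarrow> real"
  assumes "\<And>n. n \<ge> N \<Longrightarrow> \<bar>f (n + 4)\<bar> \<le> \<bar>f n\<bar> / 16"
  shows "summable f"
proof -
  define M where "M = (\<Sum>n<N+4. \<bar>f n\<bar> * 2 ^ n)"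
  have b: "\<bar>f n\<bar> \<le> M * (1/2) ^ n" for n
  proof (induction n rule: less_induct)
    case (less n)
    show ?case
    proof (cases "n < N + 4")
      case True
      have "\<bar>f n\<bar> * 2 ^ n \<le> M" unfolding M_def
        by (rule member_le_sum[where f = "\<lambda>n. \<bar>f n\<bar> * 2 ^ n"]) (use True in auto)
      then show ?thesis by (simp add: power_one_over field_simps)
    next
      case False
      define m where "m = n - 4"
      have m: "n = m + 4" "m \<ge> N" using False unfolding m_def by auto
      have "\<bar>f n\<bar> \<le> \<bar>f m\<bar> / 16" using assms m by auto
      also have "\<dots> \<le> M * (1/2)^m / 16" using less m by auto
      also have "\<dots> = M * (1/2)^n" using m by (simp add: power_add power_one_over)
      finally show ?thesis .
    qed
  qed
  show ?thesis
    by (rule summable_comparison_test[where g = "\<lambda>n. M * (1/2)^n"])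
       (use b in \<open>auto intro!: summable_mult summable_geometric\<close>)
qed

lemma co_summable: "summable (\<lambda>n. co j n * y ^ n)"
proof (rule summable_step4[where N = "nat \<lceil>16 * y^4\<rceil>"])
  fix n assume n: "nat \<lceil>16 * y^4\<rceil> \<le> n"
  hence n': "16 * y^4 \<le> real n" by linarith
  have r: "\<bar>real n - 1\<bar> * y^4 / (4 * (real n + 1) * (real n + 2) * (real n + 3) * (real n + 4)) \<le> 1/16"
  proof -
    have "\<bar>real n - 1\<bar> \<le> real n + 1" by auto
    hence "\<bar>real n - 1\<bar> * y^4 \<le> (real n + 1) * y^4" by (intro mult_right_mono) auto
    also have "\<dots> \<le> (real n + 1) * (real n / 16)" using n' by (intro mult_left_mono) auto
    also have "\<dots> \<le> (4 * (real n + 1) * (real n + 2) * (real n + 3) * (real n + 4)) / 16"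
    proof -
      have "1 \<le> 4 * (real n + 3) * (real n + 4)" by (simp add: algebra_simps)
      hence "real n + 2 \<le> (real n + 2) * (4 * (real n + 3) * (real n + 4))"
        using mult_left_mono[of 1 "4 * (real n + 3) * (real n + 4)" "real n + 2"] by simp
      hence "real n \<le> (real n + 2) * (4 * (real n + 3) * (real n + 4))" by linarith
      hence "(real n + 1) * real n \<le> (real n + 1) * ((real n + 2) * (4 * (real n + 3) * (real n + 4)))"
        by (intro mult_left_mono) auto
      thus ?thesis by (simp add: algebra_simps)
    qed
    finally have le: "\<bar>real n - 1\<bar> * y^4 \<le> (4 * (real n + 1) * (real n + 2) * (real n + 3) * (real n + 4)) / 16" .
    have pos: "0 < 4 * (real n + 1) * (real n + 2) * (real n + 3) * (real n + 4)" by auto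
    show ?thesis using le pos by (simp add: pos_divide_le_eq)
  qed
  have "\<bar>co j (n+4) * y^(n+4)\<bar> = (\<bar>real n - 1\<bar> * y^4 / (4 * (real n + 1) * (real n + 2) * (real n + 3) * (real n + 4))) * \<bar>co j n * y ^ n\<bar>"
  proof -
    have e: "n + 4 = Suc (Suc (Suc (Suc n)))" by simp
    show ?thesis unfolding e co.simps(5) by (simp add: abs_mult abs_divide power_Suc eval_nat_numeral)
  qed
  also have "\<dots> \<le> 1/16 * \<bar>co j n * y ^ n\<bar>" by (rule mult_right_mono[OF r]) auto
  finally show "\<bar>co j (n+4) * y^(n+4)\<bar> \<le> \<bar>co j n * y ^ n\<bar> / 16" by simp
qed

definition PS :: "(nat \<Rightarrow> real) \<Rightarrow> real \<Rightarrow> real" where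
  "PS c u = (\<Sum>n. c n * u ^ n)"

lemma diffs_summable:
  fixes c :: "nat \<Rightarrow> real"
  assumes "\<And>y. summable (\<lambda>n. c n * y ^ n)"
  shows "summable (\<lambda>n. (diffs ^^ k) c n * y ^ n)"
proof (induction k arbitrary: y)
  case 0 then show ?case using assms by simp
next
  case (Suc k) then show ?case using termdiff_converges_all[of "(diffs ^^ k) c" y] Suc.IH by simp
qed

lemma PS_deriv:
  fixes c :: "nat \<Rightarrow> real"
  assumes "\<And>y. summable (\<lambda>n. c n * y ^ n)"
  shows "(PS ((diffs ^^ k) c) has_real_derivative PS ((diffs ^^ Suc k) c) x) (at x)"
  unfolding PS_def using termdiffs_strong_converges_everywhere[OF diffs_summable[OF assms, of k]]
  by simp

lemma diffs4: "(diffs ^^ 4) c n = (real n + 1) * (real n + 2) * (real n + 3) * (real n + 4) * c (n + 4)"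
  by (simp add: diffs_def numeral_eq_Suc algebra_simps)

lemma co_diffs4: "(diffs ^^ 4) (co j) n = (real n - 1) / 4 * co j n"
proof -
  have e: "n + 4 = Suc (Suc (Suc (Suc n)))" by simp
  have nz: "4 * (real n + 1) * (real n + 2) * (real n + 3) * (real n + 4) \<noteq> 0" by auto
  show ?thesis unfolding diffs4 e co.simps(5) using nz by (simp add: field_simps)
qed

lemma co_ode: "PS ((diffs ^^ 4) (co j)) x = (x * PS ((diffs ^^ 1) (co j)) x - PS (co j) x) / 4"
proof -
  define f where "f n = real n * co j n * x ^ n" for n
  have s1: "summable (\<lambda>n. diffs (co j) n * x ^ n)"
    using termdiff_converges_all[of "co j"] co_summable by blast
  have "(\<lambda>n. f (Suc n)) sums (x * PS (diffs (co j)) x)"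
  proof -
    have "(\<lambda>n. x * (diffs (co j) n * x ^ n)) sums (x * PS (diffs (co j)) x)"
      unfolding PS_def by (intro sums_mult summable_sums s1)
    moreover have "(\<lambda>n. x * (diffs (co j) n * x ^ n)) = (\<lambda>n. f (Suc n))"
      by (auto simp: f_def diffs_def algebra_simps)
    ultimately show ?thesis by simp
  qed
  hence "f sums (x * PS (diffs (co j)) x + f 0)" using sums_Suc_iff by blast
  hence fs: "f sums (x * PS (diffs (co j)) x)" by (simp add: f_def)
  have cs: "(\<lambda>n. co j n * x ^ n) sums PS (co j) x"
    unfolding PS_def by (intro summable_sums co_summable)
  have "(\<lambda>n. (f n - co j n * x ^ n) / 4) sums ((x * PS (diffs (co j)) x - PS (co j) x) / 4)"
    by (intro sums_divide sums_diff fs cs)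
  moreover have "(\<lambda>n. (f n - co j n * x ^ n) / 4) = (\<lambda>n. (diffs ^^ 4) (co j) n * x ^ n)"
    by (auto simp: co_diffs4 f_def field_simps)
  ultimately show ?thesis unfolding PS_def by (simp add: sums_iff)
qed

lemma co_reindex:
  "(\<lambda>k. co j (4*k+j) * u^(4*k+j)) sums PS (co j) u"
proof -
  have sm: "strict_mono (\<lambda>k::nat. 4*k+j)" by (rule strict_monoI) simp
  have z: "co j n * u ^ n = 0" if "n \<notin> range (\<lambda>k::nat. 4*k+j)" for n
  proof (cases "n mod 4 = j")
    case True
    hence "n = 4 * (n div 4) + j" by (metis mult.commute div_mult_mod_eq)
    with that show ?thesis by blast
  qed (simp add: co_sparse)
  show ?thesis
    using sums_mono_reindex[OF sm, of "\<lambda>n. co j n * u ^ n"] z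
      summable_sums[OF co_summable[of j u]] unfolding PS_def by blast
qed

lemma hyp_step_alg:
  fixes X Pa P1 P2 P3 F q1 q2 q3 s m c :: real
  assumes "P1 > 0" "P2 > 0" "P3 > 0" "F > 0" "q1 > 0" "q2 > 0" "q3 > 0" "m > 0" "c > 0"
  shows "4 * s * (Pa / (P1 * P2 * P3) / c / F) / (1024 * (q1 * q2 * q3 * m))
       = Pa * s / (P1 * q1 * (P2 * q2) * (P3 * q3)) / (256 * c) / (F * m)"
  using assms by (simp add: field_simps)

lemma co_hyp:
  assumes c0: "co j j = 1" and b: "bA > 0" "bB > 0" "bC > 0"
    and ha: "\<And>k::nat. 4 * (a + real k) = real (4*k+j) - 1"
    and hb: "\<And>k::nat. 256 * ((bA + real k) * (bB + real k) * (bC + real k) * (real k + 1))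
               = 4 * (real (4*k+j) + 1) * (real (4*k+j) + 2) * (real (4*k+j) + 3) * (real (4*k+j) + 4) / 4"
  shows "co j (4*k+j) = pochhammer a k / (pochhammer bA k * pochhammer bB k * pochhammer bC k) / 256^k / fact k"
proof (induction k)
  case 0 then show ?case using c0 by simp
next
  case (Suc k)
  define n where "n = 4*k+j"
  have e: "4 * Suc k + j = Suc (Suc (Suc (Suc n)))" by (simp add: n_def)
  have p: "pochhammer bA k > 0" "pochhammer bB k > 0" "pochhammer bC k > 0"
    using b by (auto intro: pochhammer_pos)
  have q: "bA + real k > 0" "bB + real k > 0" "bC + real k > 0" using b by auto
  have A: "real n - 1 = 4 * (a + real k)" using ha[of k] by (simp add: n_def)
  have Bq: "4 * (real n + 1) * (real n + 2) * (real n + 3) * (real n + 4) = 1024 * ((bA + real k) * (bB + real k) * (bC + real k) * (real k + 1))"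
    using hb[of k] by (simp add: n_def)
  have "co j (4 * Suc k + j) = (real n - 1) * co j n / (4 * (real n + 1) * (real n + 2) * (real n + 3) * (real n + 4))"
    unfolding e by simp
  also have "\<dots> = 4 * (a + real k) * co j n / (1024 * ((bA + real k) * (bB + real k) * (bC + real k) * (real k + 1)))"
    unfolding A Bq ..
  also have "\<dots> = pochhammer a (Suc k) / (pochhammer bA (Suc k) * pochhammer bB (Suc k) * pochhammer bC (Suc k)) / 256^(Suc k) / fact (Suc k)"
    unfolding n_def Suc.IH pochhammer_Suc power_Suc fact_Suc using p q
    by (subst hyp_step_alg) (auto simp: add.commute)
  finally show ?case .
qed

lemma z1_PS: "z1 u = PS (co 0) u"
proof -
  have h: "co 0 (4*k+0) * u^(4*k+0) = pochhammer (-1/4) k / (pochhammer (1/4) k * pochhammer (1/2) k * pochhammer (3/4) k) * (u^4/256) ^ k / fact k" for k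
  proof -
    have c: "co 0 (4*k+0) = pochhammer (-1/4) k / (pochhammer (1/4) k * pochhammer (1/2) k * pochhammer (3/4) k) / 256^k / fact k"
      by (rule co_hyp) (auto simp: eval_nat_numeral field_simps)
    have pw: "u^(4*k+0) = u^0 * (u^4)^k" by (metis power_add power_mult mult.commute)
    show ?thesis unfolding c pw by (simp add: power_divide)
  qed
  show ?thesis using co_reindex[of 0 u] unfolding z1_def hyp1F3_def h by (simp add: sums_iff)
qed

lemma z3_PS: "z3 u = PS (co 2) u"
proof -
  have h: "co 2 (4*k+2) * u^(4*k+2) = u^2 * (pochhammer (1/4) k / (pochhammer (3/4) k * pochhammer (5/4) k * pochhammer (3/2) k) * (u^4/256) ^ k / fact k)" for k
  proof -
    have c: "co 2 (4*k+2) = pochhammer (1/4) k / (pochhammer (3/4) k * pochhammer (5/4) k * pochhammer (3/2) k) / 256^k / fact k"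
      by (rule co_hyp) (auto simp: eval_nat_numeral field_simps)
    have pw: "u^(4*k+2) = u^2 * (u^4)^k" by (metis power_add power_mult mult.commute)
    show ?thesis unfolding c pw by (simp add: power_divide)
  qed
  show ?thesis
  proof (cases "u = 0")
    case True then show ?thesis by (simp add: z3_def PS_def)
  next
    case False
    have "(\<lambda>k. u^2 * (pochhammer (1/4) k / (pochhammer (3/4) k * pochhammer (5/4) k * pochhammer (3/2) k) * (u^4/256) ^ k / fact k)) sums PS (co 2) u"
      using co_reindex[of 2 u] unfolding h .
    hence "(\<lambda>k. u^2 * (pochhammer (1/4) k / (pochhammer (3/4) k * pochhammer (5/4) k * pochhammer (3/2) k) * (u^4/256) ^ k / fact k) / u^2) sums (PS (co 2) u / u^2)"
      by (rule sums_divide)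
    hence "(\<lambda>k. pochhammer (1/4) k / (pochhammer (3/4) k * pochhammer (5/4) k * pochhammer (3/2) k) * (u^4/256) ^ k / fact k) sums (PS (co 2) u / u^2)"
      using False by simp
    thus ?thesis unfolding z3_def hyp1F3_def using False by (simp add: sums_iff)
  qed
qed

lemma z4_PS: "z4 u = PS (co 3) u"
proof -
  have h: "co 3 (4*k+3) * u^(4*k+3) = u^3 * (pochhammer (1/2) k / (pochhammer (5/4) k * pochhammer (3/2) k * pochhammer (7/4) k) * (u^4/256) ^ k / fact k)" for k
  proof -
    have c: "co 3 (4*k+3) = pochhammer (1/2) k / (pochhammer (5/4) k * pochhammer (3/2) k * pochhammer (7/4) k) / 256^k / fact k"
      by (rule co_hyp) (auto simp: eval_nat_numeral field_simps)
    have pw: "u^(4*k+3) = u^3 * (u^4)^k" by (metis power_add power_mult mult.commute)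
    show ?thesis unfolding c pw by (simp add: power_divide)
  qed
  show ?thesis
  proof (cases "u = 0")
    case True then show ?thesis by (simp add: z4_def PS_def)
  next
    case False
    have "(\<lambda>k. u^3 * (pochhammer (1/2) k / (pochhammer (5/4) k * pochhammer (3/2) k * pochhammer (7/4) k) * (u^4/256) ^ k / fact k)) sums PS (co 3) u"
      using co_reindex[of 3 u] unfolding h .
    hence "(\<lambda>k. u^3 * (pochhammer (1/2) k / (pochhammer (5/4) k * pochhammer (3/2) k * pochhammer (7/4) k) * (u^4/256) ^ k / fact k) / u^3) sums (PS (co 3) u / u^3)"
      by (rule sums_divide)
    hence "(\<lambda>k. pochhammer (1/2) k / (pochhammer (5/4) k * pochhammer (3/2) k * pochhammer (7/4) k) * (u^4/256) ^ k / fact k) sums (PS (co 3) u / u^3)"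
      using False by simp
    thus ?thesis unfolding z4_def hyp1F3_def using False by (simp add: sums_iff)
  qed
qed

lemma co1: "co 1 n = (if n = 1 then 1 else 0)"
  by (induction "1::nat" n rule: co.induct) auto

lemma z2_PS: "z2 u = PS (co 1) u"
proof -
  have "co 1 n * u ^ n = (if n = 1 then u else 0)" for n using co1[of n] by simp
  hence "(\<lambda>n. co 1 n * u ^ n) = (\<lambda>n. if n = 1 then u else 0)" by (rule ext)
  thus ?thesis unfolding PS_def z2_def using sums_single[of 1 "\<lambda>_. u"] by (simp add: sums_iff)
qed

lemma abs4: "\<bar>a+b+c+d\<bar> \<le> \<bar>a\<bar> + \<bar>b\<bar> + \<bar>c\<bar> + \<bar>d::real\<bar>"
  using abs_triangle_ineq[of "a+b+c" d] abs_triangle_ineq[of "a+b" c] abs_triangle_ineq[of a b] by linarith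

lemma energy_bound:
  fixes w0 w1 w2 w3 x M :: real
  assumes "\<bar>x\<bar> \<le> M"
  shows "\<bar>2 * (w0*w1 + w1*w2 + w2*w3 + w3*((x*w1 - w0)/4))\<bar> \<le> (2 + M) * (w0^2 + w1^2 + w2^2 + w3^2)"
proof -
  have sq: "\<bar>2*p*q\<bar> \<le> p^2 + q^2" for p q :: real
  proof -
    have "0 \<le> (\<bar>p\<bar> - \<bar>q\<bar>)^2" by simp
    thus ?thesis by (simp add: power2_eq_square algebra_simps abs_mult)
  qed
  have M0: "0 \<le> M" using assms by linarith
  have t4: "\<bar>2 * (w3*((x*w1 - w0)/4))\<bar> \<le> M/4 * (w3^2 + w1^2) + 1/4 * (w3^2 + w0^2)"
  proof -
    have "\<bar>2 * (w3*((x*w1 - w0)/4))\<bar> = \<bar>x * (2*w3*w1) - 2*w3*w0\<bar> / 4" by (simp add: algebra_simps abs_divide)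
    also have "\<dots> \<le> (\<bar>x\<bar> * \<bar>2*w3*w1\<bar> + \<bar>2*w3*w0\<bar>) / 4"
      by (intro divide_right_mono) (auto simp: abs_mult intro: order.trans[OF abs_triangle_ineq4])
    also have "\<dots> \<le> (M * (w3^2 + w1^2) + (w3^2 + w0^2)) / 4"
      using M0 by (intro divide_right_mono add_mono mult_mono assms sq) auto
    finally show ?thesis by (simp add: field_simps)
  qed
  have "\<bar>2 * (w0*w1 + w1*w2 + w2*w3 + w3*((x*w1 - w0)/4))\<bar>
        \<le> \<bar>2*w0*w1\<bar> + \<bar>2*w1*w2\<bar> + \<bar>2*w2*w3\<bar> + \<bar>2 * (w3*((x*w1 - w0)/4))\<bar>"
  proof -
    have e: "2 * (w0*w1 + w1*w2 + w2*w3 + w3*((x*w1 - w0)/4)) = 2*w0*w1 + 2*w1*w2 + 2*w2*w3 + 2 * (w3*((x*w1 - w0)/4))"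
      by (simp add: algebra_simps)
    show ?thesis unfolding e by (rule abs4)
  qed
  also have "\<dots> \<le> (w0^2 + w1^2) + (w1^2 + w2^2) + (w2^2 + w3^2) + (M/4 * (w3^2 + w1^2) + 1/4 * (w3^2 + w0^2))"
    by (intro add_mono sq t4)
  also have "\<dots> \<le> (2 + M) * (w0^2 + w1^2 + w2^2 + w3^2)"
  proof -
    have r: "(2 + M) * (w0^2 + w1^2 + w2^2 + w3^2) = 2*w0^2 + 2*w1^2 + 2*w2^2 + 2*w3^2 + M*w0^2 + M*w1^2 + M*w2^2 + M*w3^2"
      by (simp add: algebra_simps)
    have l: "(w0^2 + w1^2) + (w1^2 + w2^2) + (w2^2 + w3^2) + (M/4 * (w3^2 + w1^2) + 1/4 * (w3^2 + w0^2))
       = w0^2 + 2*w1^2 + 2*w2^2 + w3^2 + M*w3^2/4 + M*w1^2/4 + w3^2/4 + w0^2/4"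
      by (simp add: algebra_simps)
    have h: "0 \<le> M*w0^2" "0 \<le> M*w1^2" "0 \<le> M*w2^2" "0 \<le> M*w3^2" using M0 by auto
    have h2: "0 \<le> w0^2" "0 \<le> w1^2" "0 \<le> w2^2" "0 \<le> w3^2" by auto
    show ?thesis unfolding r l using h h2 by linarith
  qed
  finally show ?thesis .
qed

definition odesys :: "(real \<Rightarrow> real) \<Rightarrow> (real \<Rightarrow> real) \<Rightarrow> (real \<Rightarrow> real) \<Rightarrow> (real \<Rightarrow> real) \<Rightarrow> real \<Rightarrow> bool" where
  "odesys w0 w1 w2 w3 x \<longleftrightarrow> (w0 has_real_derivative w1 x) (at x) \<and> (w1 has_real_derivative w2 x) (at x)
     \<and> (w2 has_real_derivative w3 x) (at x) \<and> (w3 has_real_derivative (x * w1 x - w0 x) / 4) (at x)"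

lemma energy_deriv:
  assumes "odesys w0 w1 w2 w3 x"
  shows "((\<lambda>x. w0 x^2 + w1 x^2 + w2 x^2 + w3 x^2) has_real_derivative
          2 * (w0 x*w1 x + w1 x*w2 x + w2 x*w3 x + w3 x*((x*w1 x - w0 x)/4))) (at x)"
  using assms unfolding odesys_def
  by (auto intro!: derivative_eq_intros simp: algebra_simps)

lemma ode_unique:
  assumes sys: "\<And>x. min p q \<le> x \<Longrightarrow> x \<le> max p q \<Longrightarrow> odesys w0 w1 w2 w3 x"
    and z: "w0 p = 0" "w1 p = 0" "w2 p = 0" "w3 p = 0"
  shows "w0 q = 0 \<and> w1 q = 0 \<and> w2 q = 0 \<and> w3 q = 0"
proof -
  define E where "E x = w0 x^2 + w1 x^2 + w2 x^2 + w3 x^2" for x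
  define E' where "E' x = 2 * (w0 x*w1 x + w1 x*w2 x + w2 x*w3 x + w3 x*((x*w1 x - w0 x)/4))" for x
  define K where "K = 2 + (\<bar>p\<bar> + \<bar>q\<bar>)"
  have dE: "(E has_real_derivative E' x) (at x)" if "min p q \<le> x" "x \<le> max p q" for x
    unfolding E_def E'_def using energy_deriv[OF sys[OF that]] .
  have bE: "\<bar>E' x\<bar> \<le> K * E x" if "min p q \<le> x" "x \<le> max p q" for x
    unfolding E_def E'_def K_def using that by (intro energy_bound) auto
  have E0: "E p = 0" using z by (simp add: E_def)
  have Epos: "E x \<ge> 0" for x by (simp add: E_def)
  have "E q \<le> 0"
  proof (cases "p \<le> q")
    case True
    define f where "f x = E x * exp (- K * x)" for x
    have "f q \<le> f p"
    proof (rule DERIV_nonpos_imp_nonincreasing[OF True])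
      fix x assume x: "p \<le> x" "x \<le> q"
      have "(f has_real_derivative E' x * exp (- K * x) + E x * (exp (- K * x) * (- K))) (at x)"
      proof -
        have dEx: "(E has_real_derivative E' x) (at x)" by (rule dE) (use x True in auto)
        show ?thesis unfolding f_def using dEx by (auto intro!: derivative_eq_intros)
      qed
      moreover have "E' x * exp (- K * x) + E x * (exp (- K * x) * (- K)) = (E' x - K * E x) * exp (- K * x)"
        by (simp add: algebra_simps)
      moreover have "E' x - K * E x \<le> 0" using bE[of x] x True by auto
      ultimately show "\<exists>y. (f has_real_derivative y) (at x) \<and> y \<le> 0"
        by (intro exI[of _ "(E' x - K * E x) * exp (- K * x)"]) (auto simp: mult_nonpos_nonneg)
    qed
    thus ?thesis by (simp add: f_def E0 mult_le_0_iff)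
  next
    case False
    hence qp: "q \<le> p" by simp
    define f where "f x = E x * exp (K * x)" for x
    have "f q \<le> f p"
    proof (rule DERIV_nonneg_imp_nondecreasing[OF qp])
      fix x assume x: "q \<le> x" "x \<le> p"
      have "(f has_real_derivative E' x * exp (K * x) + E x * (exp (K * x) * K)) (at x)"
      proof -
        have dEx: "(E has_real_derivative E' x) (at x)" by (rule dE) (use x qp in auto)
        show ?thesis unfolding f_def using dEx by (auto intro!: derivative_eq_intros)
      qed
      moreover have "E' x * exp (K * x) + E x * (exp (K * x) * K) = (E' x + K * E x) * exp (K * x)"
        by (simp add: algebra_simps)
      moreover have "E' x + K * E x \<ge> 0" using bE[of x] x qp by auto
      ultimately show "\<exists>y. (f has_real_derivative y) (at x) \<and> y \<ge> 0"
        by (intro exI[of _ "(E' x + K * E x) * exp (K * x)"]) auto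
    qed
    thus ?thesis by (simp add: f_def E0 mult_le_0_iff)
  qed
  hence "E q = 0" using Epos[of q] by linarith
  hence "w0 q^2 = 0 \<and> w1 q^2 = 0 \<and> w2 q^2 = 0 \<and> w3 q^2 = 0" unfolding E_def
    using zero_le_power2[of "w0 q"] zero_le_power2[of "w1 q"] zero_le_power2[of "w2 q"] zero_le_power2[of "w3 q"]
    by linarith
  thus ?thesis by simp
qed

definition G :: "real \<Rightarrow> real \<Rightarrow> real \<Rightarrow> real \<Rightarrow> nat \<Rightarrow> real \<Rightarrow> real" where
  "G c0 c1 c2 c3 k u = c0 * PS ((diffs ^^ k) (co 0)) u + c1 * PS ((diffs ^^ k) (co 1)) u
     + c2 * PS ((diffs ^^ k) (co 2)) u + c3 * PS ((diffs ^^ k) (co 3)) u"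

lemma G_deriv: "(G c0 c1 c2 c3 k has_real_derivative G c0 c1 c2 c3 (Suc k) x) (at x)"
proof -
  have d: "(PS ((diffs ^^ k) (co j)) has_real_derivative PS ((diffs ^^ Suc k) (co j)) x) (at x)" for j
    using PS_deriv[of "co j" k x, OF co_summable] by simp
  show ?thesis unfolding G_def[abs_def] funpow.simps o_def
    by (auto intro!: derivative_eq_intros d)
qed

lemma G_ode: "G c0 c1 c2 c3 4 x = (x * G c0 c1 c2 c3 1 x - G c0 c1 c2 c3 0 x) / 4"
  unfolding G_def co_ode by (simp add: field_simps)

lemma G_odesys: "odesys (G c0 c1 c2 c3 0) (G c0 c1 c2 c3 1) (G c0 c1 c2 c3 2) (G c0 c1 c2 c3 3) x"
proof -
  have e: "Suc 0 = 1" "Suc 1 = 2" "Suc 2 = 3" "Suc 3 = 4" by simp_all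
  note d0 = G_deriv[of c0 c1 c2 c3 0 x, unfolded e]
  note d1 = G_deriv[of c0 c1 c2 c3 1 x, unfolded e]
  note d2 = G_deriv[of c0 c1 c2 c3 2 x, unfolded e]
  note d3 = G_deriv[of c0 c1 c2 c3 3 x, unfolded e G_ode]
  show ?thesis unfolding odesys_def using d0 d1 d2 d3 by blast
qed

lemma G_at0: "G c0 c1 c2 c3 0 0 = c0" "G c0 c1 c2 c3 1 0 = c1" "G c0 c1 c2 c3 2 0 = 2 * c2" "G c0 c1 c2 c3 3 0 = 6 * c3"
  unfolding G_def PS_def by (simp_all add: diffs_def numeral_eq_Suc)

lemma G0_z: "G c0 c1 c2 c3 0 u = c0 * z1 u + c1 * z2 u + c2 * z3 u + c3 * z4 u"
  unfolding G_def by (simp add: z1_PS z2_PS z3_PS z4_PS)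

lemma G_lin: "G (a0 - b0) (a1 - b1) (a2 - b2) (a3 - b3) k u = G a0 a1 a2 a3 k u - G b0 b1 b2 b3 k u"
  unfolding G_def by (simp add: algebra_simps)

lemma G_surj:
  fixes u0 v0 v1 v2 v3 :: real
  shows "\<exists>c0 c1 c2 c3. G c0 c1 c2 c3 0 u0 = v0 \<and> G c0 c1 c2 c3 1 u0 = v1 \<and> G c0 c1 c2 c3 2 u0 = v2 \<and> G c0 c1 c2 c3 3 u0 = v3"
proof -
  define L :: "real \<times> real \<times> real \<times> real \<Rightarrow> real \<times> real \<times> real \<times> real" where
    "L = (\<lambda>(c0, c1, c2, c3). (G c0 c1 c2 c3 0 u0, G c0 c1 c2 c3 1 u0, G c0 c1 c2 c3 2 u0, G c0 c1 c2 c3 3 u0))"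
  have lin: "linear L"
    by (rule linearI) (auto simp: L_def G_def algebra_simps split: prod.splits)
  have inj: "inj L"
  proof (rule injI)
    fix a b assume ab: "L a = L b"
    obtain a0 a1 a2 a3 where a: "a = (a0, a1, a2, a3)" by (cases a) auto
    obtain b0 b1 b2 b3 where b: "b = (b0, b1, b2, b3)" by (cases b) auto
    define e0 e1 e2 e3 where "e0 = a0 - b0" "e1 = a1 - b1" "e2 = a2 - b2" "e3 = a3 - b3"
    have z: "G e0 e1 e2 e3 k u0 = 0" if "k < 4" for k
    proof -
      have "G a0 a1 a2 a3 k u0 = G b0 b1 b2 b3 k u0" using ab that
        by (auto simp: L_def a b eval_nat_numeral less_Suc_eq)
      thus ?thesis unfolding e0_e1_e2_e3_def G_lin by simp
    qed
    have z0: "G e0 e1 e2 e3 0 u0 = 0" and z1: "G e0 e1 e2 e3 1 u0 = 0"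
      and z2: "G e0 e1 e2 e3 2 u0 = 0" and z3: "G e0 e1 e2 e3 3 u0 = 0" by (rule z; simp)+
    have "G e0 e1 e2 e3 0 0 = 0 \<and> G e0 e1 e2 e3 1 0 = 0 \<and> G e0 e1 e2 e3 2 0 = 0 \<and> G e0 e1 e2 e3 3 0 = 0"
      by (rule ode_unique[where p = u0, OF G_odesys z0 z1 z2 z3])
    thus "a = b" unfolding G_at0 a b e0_e1_e2_e3_def by simp
  qed
  have "surj L" by (rule linear_injective_imp_surjective[OF lin inj]) auto
  then obtain c where "L c = (v0, v1, v2, v3)" by (metis surjD)
  thus ?thesis by (cases c) (auto simp: L_def)
qed
theorem theorem2:
  fixes B :: real and y :: "real \<Rightarrow> real \<Rightarrow> real" and Z :: "real \<Rightarrow> real"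
    and D :: "real set"
    and yt y1 y2 y3 y4 :: "real \<Rightarrow> real \<Rightarrow> real"
  assumes B: "B > 0"
    and D: "D = {0<..} \<or> D = {..<0}"
    and dt: "\<And>t x. t > 0 \<Longrightarrow> x \<in> D \<Longrightarrow> ((\<lambda>s. y s x) has_real_derivative yt t x) (at t)"
    and dx1: "\<And>t x. t > 0 \<Longrightarrow> x \<in> D \<Longrightarrow> ((\<lambda>w. y t w) has_real_derivative y1 t x) (at x)"
    and dx2: "\<And>t x. t > 0 \<Longrightarrow> x \<in> D \<Longrightarrow> ((\<lambda>w. y1 t w) has_real_derivative y2 t x) (at x)"
    and dx3: "\<And>t x. t > 0 \<Longrightarrow> x \<in> D \<Longrightarrow> ((\<lambda>w. y2 t w) has_real_derivative y3 t x) (at x)"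
    and dx4: "\<And>t x. t > 0 \<Longrightarrow> x \<in> D \<Longrightarrow> ((\<lambda>w. y3 t w) has_real_derivative y4 t x) (at x)"
    and pde: "\<And>t x. t > 0 \<Longrightarrow> x \<in> D \<Longrightarrow> yt t x + B * y4 t x = 0"
    and selfsim: "\<And>t x. t > 0 \<Longrightarrow> x \<in> D \<Longrightarrow>
                    y t x = (B * t) powr (1/4) * Z (x / (B * t) powr (1/4))"
  shows "\<exists>C1 C2 C3 C4 :: real. \<forall>t x. t > 0 \<longrightarrow> x \<in> D \<longrightarrow>
           y t x = (B * t) powr (1/4) *
             (C1 * z1 (x / (B * t) powr (1/4)) + C2 * z2 (x / (B * t) powr (1/4))
              + C3 * z3 (x / (B * t) powr (1/4)) + C4 * z4 (x / (B * t) powr (1/4)))"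
proof -
  define t0 where "t0 = 1 / B"
  have t0: "t0 > 0" "B * t0 = 1" using B by (auto simp: t0_def)
  have openD: "open D" using D by auto
  have cone: "x / c \<in> D" if "x \<in> D" "c > 0" for x c
    using D that by (auto simp: divide_pos_pos divide_neg_pos)
  have Zeq: "Z x = y t0 x" if "x \<in> D" for x
    using selfsim[OF t0(1) that] t0(2) by simp
  have dZ: "(Z has_real_derivative y1 t0 x) (at x)" if "x \<in> D" for x
    by (rule has_field_derivative_transform_within_open[OF dx1[OF t0(1) that] openD that])
       (simp add: Zeq)
  define Sf where "Sf s = (B * s) powr (1/4)" for s
  have Sf1: "Sf t0 = 1" using t0 by (simp add: Sf_def)
  have dSf: "(Sf has_real_derivative B / 4) (at t0)"
  proof -
    have "((\<lambda>s. (B * s) powr (1/4)) has_real_derivative 1/4 * (B * t0) powr (1/4 - of_nat 1) * B) (at t0)"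
      by (rule DERIV_fun_powr) (auto intro!: derivative_eq_intros simp: t0)
    thus ?thesis unfolding Sf_def[abs_def] using t0 by simp
  qed
  have ode: "y4 t0 x = (x * y1 t0 x - Z x) / 4" if x: "x \<in> D" for x
  proof -
    have dq: "((\<lambda>s. x / Sf s) has_real_derivative - x * (B / 4)) (at t0)"
      using dSf Sf1 by (auto intro!: derivative_eq_intros)
    have dZx: "(Z has_real_derivative y1 t0 x) (at (x / Sf t0))" using dZ[OF x] Sf1 by simp
    have dprod: "((\<lambda>s. Sf s * Z (x / Sf s)) has_real_derivative B / 4 * (Z x - x * y1 t0 x)) (at t0)"
      using DERIV_mult[OF dSf DERIV_chain2[OF dZx dq]] Sf1 by (simp add: algebra_simps)
    have "((\<lambda>s. y s x) has_real_derivative B / 4 * (Z x - x * y1 t0 x)) (at t0)"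
      by (rule has_field_derivative_transform_within_open[OF dprod, of "{0<..}"])
         (use t0 x selfsim in \<open>auto simp: Sf_def\<close>)
    hence yteq: "yt t0 x = B / 4 * (Z x - x * y1 t0 x)"
      using dt[OF t0(1) x] by (rule DERIV_unique[symmetric])
    have "B * (Z x + 4 * y4 t0 x - x * y1 t0 x) = 0"
      using pde[OF t0(1) x] unfolding yteq by (simp add: algebra_simps)
    hence "Z x + 4 * y4 t0 x - x * y1 t0 x = 0" using B by simp
    thus ?thesis by simp
  qed
  have sysZ: "odesys Z (y1 t0) (y2 t0) (y3 t0) x" if x: "x \<in> D" for x
    unfolding odesys_def using dZ[OF x] dx2[OF t0(1) x] dx3[OF t0(1) x] dx4[OF t0(1) x] ode[OF x] by simp
  define u0 :: real where "u0 = (if D = {0<..} then 1 else -1)"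
  have u0D: "u0 \<in> D" using D by (auto simp: u0_def)
  have seg: "x \<in> D" if "v \<in> D" "min u0 v \<le> x" "x \<le> max u0 v" for v x
    using D that by (auto simp: u0_def split: if_splits)
  obtain c0 c1 c2 c3 where c: "G c0 c1 c2 c3 0 u0 = Z u0" "G c0 c1 c2 c3 1 u0 = y1 t0 u0"
      "G c0 c1 c2 c3 2 u0 = y2 t0 u0" "G c0 c1 c2 c3 3 u0 = y3 t0 u0"
    using G_surj[of u0 "Z u0" "y1 t0 u0" "y2 t0 u0" "y3 t0 u0"] by metis
  have ZG: "Z v = G c0 c1 c2 c3 0 v" if v: "v \<in> D" for v
  proof -
    define w0 where "w0 u = Z u - G c0 c1 c2 c3 0 u" for u
    define w1 where "w1 u = y1 t0 u - G c0 c1 c2 c3 1 u" for u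
    define w2 where "w2 u = y2 t0 u - G c0 c1 c2 c3 2 u" for u
    define w3 where "w3 u = y3 t0 u - G c0 c1 c2 c3 3 u" for u
    have sysw: "odesys w0 w1 w2 w3 x" if "min u0 v \<le> x" "x \<le> max u0 v" for x
    proof -
      have xD: "x \<in> D" using seg v that by blast
      have A: "odesys Z (y1 t0) (y2 t0) (y3 t0) x" by (rule sysZ[OF xD])
      have Bs: "odesys (G c0 c1 c2 c3 0) (G c0 c1 c2 c3 1) (G c0 c1 c2 c3 2) (G c0 c1 c2 c3 3) x"
        by (rule G_odesys)
      show ?thesis
        using A Bs unfolding odesys_def w0_def[abs_def] w1_def[abs_def] w2_def[abs_def] w3_def[abs_def]
        by (auto intro!: derivative_eq_intros simp: algebra_simps diff_divide_distrib)
    qed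
    have "w0 v = 0 \<and> w1 v = 0 \<and> w2 v = 0 \<and> w3 v = 0"
      by (rule ode_unique[where p = u0, OF sysw]) (use c in \<open>auto simp: w0_def w1_def w2_def w3_def\<close>)
    thus ?thesis by (simp add: w0_def)
  qed
  show ?thesis
  proof (intro exI allI impI)
    fix t x :: real assume t: "t > 0" and x: "x \<in> D"
    have "(B * t) powr (1/4) > 0" using B t by simp
    hence "x / (B * t) powr (1/4) \<in> D" by (rule cone[OF x])
    thus "y t x = (B * t) powr (1/4) *
             (c0 * z1 (x / (B * t) powr (1/4)) + c1 * z2 (x / (B * t) powr (1/4))
              + c2 * z3 (x / (B * t) powr (1/4)) + c3 * z4 (x / (B * t) powr (1/4)))"
      using selfsim[OF t x] ZG G0_z by simp
  qed
qed

end
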